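(* Let $\varphi$ be a GFG-QPTL formula and $\mathcal X_1,\mathcal X_2\in\mathrm{HAsg}_\supseteq(\mathrm{free}(\varphi))$ with $\mathcal X_1\sqsubseteq\mathcal X_2$. Then $\mathcal X_1\models^{\exists\forall}\varphi$ implies $\mathcal X_2\models^{\exists\forall}\varphi$, and $\mathcal X_2\models^{\forall\exists}\varphi$ implies $\mathcal X_1\models^{\forall\exists}\varphi$.
   Context: Let $AP$ be a set of atomic propositions and $\mathbb B=\{\top,\bot\}$. A temporal valuation is a function $f:\mathbb N\to\mathbb B$. An assignment is a partial function $\chi:AP\rightharpoonup(\mathbb N\to\mathbb B)$; $\mathrm{Asg}$ is the set of all assignments, $\mathrm{Asg}(P)$ the set of assignments with domain exactly $P\subseteq AP$. For an assignment $\chi$, $p\in AP$ and a temporal valuation $f$, $\chi[p\mapsto f]$ is the assignment that agrees with $\chi$ except that it maps $p$ to $f$. A hyperassignment is a set $\mathcal X$ with $\emptyset\neq\mathcal X\subseteq 2^{\mathrm{Asg}(P)}$ and $\emptyset\notin\mathcal X$, for some $P\subseteq AP$; this $P$ is denoted $\mathrm{ap}(\mathcal X)$. $\mathrm{HAsg}$ is the set of all hyperassignments, $\mathrm{HAsg}(P)$ those with $\mathrm{ap}(\mathcal X)=P$, and $\mathrm{HAsg}_\supseteq(P)$ those with $\mathrm{ap}(\mathcal X)\supseteq P$. For $\mathcal X_1,\mathcal X_2\in\mathrm{HAsg}$, $\mathcal X_1\sqsubseteq\mathcal X_2$ iff for every $X_1\in\mathcal X_1$ there is $X_2\in\mathcal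 X_2$ with $X_2\subseteq X_1$. A choice function for $\mathcal X$ is a map $c:\mathcal X\to\mathrm{Asg}$ with $c(X)\in X$ for all $X\in\mathcal X$. The dual of $\mathcal X$ is $\overline{\mathcal X}=\{\mathrm{img}(c): c\text{ a choice function for }\mathcal X\}$. $\mathrm{par}(\mathcal X)$ is the set of pairs $(\mathcal X_1,\mathcal X_2)$ of (possibly empty) subsets of $\mathcal X$ with $\mathcal X_1\cap\mathcal X_2=\emptyset$ and $\mathcal X_1\cup\mathcal X_2=\mathcal X$. A functor over $P\subseteq AP$ is a function $F:\mathrm{Asg}(P)\to(\mathbb N\to\mathbb B)$; $\mathrm{Fnc}(P)$ is the set of all of them. $\mathrm{ext}(\chi,F,p)=\chi[p\mapsto F(\chi)]$ and $\mathrm{ext}(X,F,p)=\{\mathrm{ext}(\chi,F,p):\chi\in X\}$. For $\chi_1,\chi_2\in\mathrm{Asg}(P)$, $p\in P$, $k\in\mathbb N$: $\chi_1\approx^{>k}_p\chi_2$ iff $\chi_1(q)=\chi_2(q)$ for all $q\in P\setminus\{p\}$ and $\chi_1(p)(t)=\chi_2(p)(t)$ for all $t\le k$; $\chi_1\approx^{\ge k}_p\chi_2$ is defined the same way with $t<k$ in place of $t\le k$. $F\in\mathrm{Fnc}(P)$ is behavioral (resp. strongly behavioral) w.r.t. $p\in P$ if $F(\chi_1)(k)=F(\chi_2)(k)$ for all $k\in\mathbb N$ and all $\chi_1,\chi_2$ with $\chi_1\approx^{>k}_p\chi_2$ (resp. $\chi_1\approx^{\ge k}_p\chi_2$). A quantifier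 specification is a pair $\sigma=\langle P_B,P_S\rangle$ of subsets of $AP$; $\mathrm{Fnc}_\sigma(P)$ is the set of $F\in\mathrm{Fnc}(P)$ that are behavioral w.r.t. every $p\in P_B\cap P$ and strongly behavioral w.r.t. every $p\in P_S\cap P$. $\mathrm{ext}_\sigma(\mathcal X,p)=\{\mathrm{ext}(X,F,p):X\in\mathcal X,\ F\in\mathrm{Fnc}_\sigma(\mathrm{ap}(\mathcal X))\}$. GFG-QPTL formulas are generated by $\varphi::=\psi\mid\neg\varphi\mid\varphi\wedge\varphi\mid\varphi\vee\varphi\mid\exists p{:}\sigma.\varphi\mid\forall p{:}\sigma.\varphi$, where $\psi$ is an LTL formula over $AP$, $p\in AP$ and $\sigma$ a quantifier specification; we also write $\exists^\sigma p.\varphi$, $\forall^\sigma p.\varphi$. QPTL formulas are those in which every specification is $\langle\emptyset,\emptyset\rangle$. $\mathrm{free}(\varphi)$ is the set of free propositions. $\chi\models_{LTL}\psi$ iff the infinite word whose $t$-th letter is the valuation $q\mapsto\chi(q)(t)$ satisfies $\psi$ in the standard LTL sense. Alternation flags are $\exists\forall$ and $\forall\exists$; $\bar\alpha$ is the flag different from $\alpha$. For a GFG-QPTL formula $\varphi$, $\mathcal X\in\mathrm{HAsg}_\supseteq(\mathrm{free}(\varphi))$ and flag $\alpha$, $\mathcal X\models^\alpha\varphi$ is defined inductively: (1) for LTL $\psi$: $\mathcal X\models^{\exists\forall}\psi$ iff there is $X\in\mathcal X$ with $\chi\models_{LTL}\psi$ for all $\chi\in X$; $\mathcal X\models^{\forall\exists}\psi$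 iff for every $X\in\mathcal X$ there is $\chi\in X$ with $\chi\models_{LTL}\psi$; (2) $\mathcal X\models^\alpha\neg\phi$ iff not $\mathcal X\models^{\bar\alpha}\phi$; (3) $\mathcal X\models^{\exists\forall}\phi_1\wedge\phi_2$ iff for every $(\mathcal X_1,\mathcal X_2)\in\mathrm{par}(\mathcal X)$, either ($\mathcal X_1\ne\emptyset$ and $\mathcal X_1\models^{\exists\forall}\phi_1$) or ($\mathcal X_2\ne\emptyset$ and $\mathcal X_2\models^{\exists\forall}\phi_2$); $\mathcal X\models^{\forall\exists}\phi_1\wedge\phi_2$ iff $\overline{\mathcal X}\models^{\exists\forall}\phi_1\wedge\phi_2$; (4) $\mathcal X\models^{\forall\exists}\phi_1\vee\phi_2$ iff there is $(\mathcal X_1,\mathcal X_2)\in\mathrm{par}(\mathcal X)$ such that ($\mathcal X_1\neq\emptyset$ implies $\mathcal X_1\models^{\forall\exists}\phi_1$) and ($\mathcal X_2\neq\emptyset$ implies $\mathcal X_2\models^{\forall\exists}\phi_2$); $\mathcal X\models^{\exists\forall}\phi_1\vee\phi_2$ iff $\overline{\mathcal X}\models^{\forall\exists}\phi_1\vee\phi_2$; (5) $\mathcal X\models^{\exists\forall}\exists p{:}\sigma.\phi$ iff $\mathrm{ext}_\sigma(\mathcal X,p)\models^{\exists\forall}\phi$; $\mathcal X\models^{\forall\exists}\exists p{:}\sigma.\phi$ iff $\overline{\mathcal X}\models^{\exists\forall}\exists p{:}\sigma.\phi$; (6) $\mathcal X\models^{\forall\exists}\forall p{:}\sigma.\phi$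 iff $\mathrm{ext}_\sigma(\mathcal X,p)\models^{\forall\exists}\phi$; $\mathcal X\models^{\exists\forall}\forall p{:}\sigma.\phi$ iff $\overline{\mathcal X}\models^{\forall\exists}\forall p{:}\sigma.\phi$. *)

theory Defs
  imports Main
begin

datatype 'p ltl =
    LProp 'p
  | LTrue
  | LNot "'p ltl"
  | LAnd "'p ltl" "'p ltl"
  | LOr "'p ltl" "'p ltl"
  | LNext "'p ltl"
  | LUntil "'p ltl" "'p ltl"

fun ltl_sem :: "(nat \<Rightarrow> 'p set) \<Rightarrow> nat \<Rightarrow> 'p ltl \<Rightarrow> bool" where
  "ltl_sem w i (LProp q) = (q \<in> w i)"
| "ltl_sem w i LTrue = True"
| "ltl_sem w i (LNot a) = (\<not> ltl_sem w i a)"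
| "ltl_sem w i (LAnd a b) = (ltl_sem w i a \<and> ltl_sem w i b)"
| "ltl_sem w i (LOr a b) = (ltl_sem w i a \<or> ltl_sem w i b)"
| "ltl_sem w i (LNext a) = ltl_sem w (Suc i) a"
| "ltl_sem w i (LUntil a b) = (\<exists>j\<ge>i. ltl_sem w j b \<and> (\<forall>k. i \<le> k \<and> k < j \<longrightarrow> ltl_sem w k a))"

fun ltl_props :: "'p ltl \<Rightarrow> 'p set" where
  "ltl_props (LProp q) = {q}"
| "ltl_props LTrue = {}"
| "ltl_props (LNot a) = ltl_props a"
| "ltl_props (LAnd a b) = ltl_props a \<union> ltl_props b"
| "ltl_props (LOr a b) = ltl_props a \<union> ltl_props b"
| "ltl_props (LNext a) = ltl_props a"
| "ltl_props (LUntil a b) = ltl_props a \<union> ltl_props b"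

type_synonym tval = "nat \<Rightarrow> bool"
type_synonym 'p asg = "'p \<rightharpoonup> tval"
type_synonym 'p hasg = "'p asg set set"

definition Asg :: "'p set \<Rightarrow> 'p asg set" where
  "Asg P = {\<chi>. dom \<chi> = P}"

definition word_of :: "'p asg \<Rightarrow> nat \<Rightarrow> 'p set" where
  "word_of \<chi> t = {q. \<exists>f. \<chi> q = Some f \<and> f t}"

definition models_ltl :: "'p asg \<Rightarrow> 'p ltl \<Rightarrow> bool" where
  "models_ltl \<chi> \<psi> = ltl_sem (word_of \<chi>) 0 \<psi>"

definition is_hasg :: "'p hasg \<Rightarrow> bool" where
  "is_hasg X \<longleftrightarrow> X \<noteq> {} \<and> {} \<notin> X \<and> (\<exists>P. \<forall>S\<in>X. S \<subseteq> Asg P)"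

definition ap :: "'p hasg \<Rightarrow> 'p set" where
  "ap X = (THE P. \<forall>S\<in>X. S \<subseteq> Asg P)"

definition HAsg_sup :: "'p set \<Rightarrow> 'p hasg set" where
  "HAsg_sup P = {X. is_hasg X \<and> P \<subseteq> ap X}"

definition hleq :: "'p hasg \<Rightarrow> 'p hasg \<Rightarrow> bool" (infix "\<sqsubseteq>\<^sub>H" 50) where
  "X1 \<sqsubseteq>\<^sub>H X2 \<longleftrightarrow> (\<forall>S1\<in>X1. \<exists>S2\<in>X2. S2 \<subseteq> S1)"

text \<open>Dual: images of choice functions (a choice function is only relevant on \<open>X\<close>).\<close>
definition dual :: "'p hasg \<Rightarrow> 'p hasg" where
  "dual X = {c ` X | c. \<forall>S\<in>X. c S \<in> S}"

definition par :: "'a set \<Rightarrow> ('a set \<times> 'a set) set" where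
  "par X = {(X1, X2). X1 \<subseteq> X \<and> X2 \<subseteq> X \<and> X1 \<inter> X2 = {} \<and> X1 \<union> X2 = X}"

text \<open>A functor over \<open>P\<close> is represented by a total function; only its values on \<open>Asg P\<close> matter.\<close>
definition agree_gt :: "'p set \<Rightarrow> 'p \<Rightarrow> nat \<Rightarrow> 'p asg \<Rightarrow> 'p asg \<Rightarrow> bool" where
  "agree_gt P p k \<chi>1 \<chi>2 \<longleftrightarrow> (\<forall>q\<in>P - {p}. \<chi>1 q = \<chi>2 q) \<and> (\<forall>t\<le>k. the (\<chi>1 p) t = the (\<chi>2 p) t)"

definition agree_ge :: "'p set \<Rightarrow> 'p \<Rightarrow> nat \<Rightarrow> 'p asg \<Rightarrow> 'p asg \<Rightarrow> bool" where
  "agree_ge P p k \<chi>1 \<chi>2 \<longleftrightarrow> (\<forall>q\<in>P - {p}. \<chi>1 q = \<chi>2 q) \<and> (\<forall>t<k. the (\<chi>1 p) t = the (\<chi>2 p) t)"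

definition behavioral :: "'p set \<Rightarrow> 'p \<Rightarrow> ('p asg \<Rightarrow> tval) \<Rightarrow> bool" where
  "behavioral P p F \<longleftrightarrow> (\<forall>k \<chi>1 \<chi>2. \<chi>1 \<in> Asg P \<longrightarrow> \<chi>2 \<in> Asg P \<longrightarrow> agree_gt P p k \<chi>1 \<chi>2 \<longrightarrow> F \<chi>1 k = F \<chi>2 k)"

definition strongly_behavioral :: "'p set \<Rightarrow> 'p \<Rightarrow> ('p asg \<Rightarrow> tval) \<Rightarrow> bool" where
  "strongly_behavioral P p F \<longleftrightarrow> (\<forall>k \<chi>1 \<chi>2. \<chi>1 \<in> Asg P \<longrightarrow> \<chi>2 \<in> Asg P \<longrightarrow> agree_ge P p k \<chi>1 \<chi>2 \<longrightarrow> F \<chi>1 k = F \<chi>2 k)"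

type_synonym 'p qspec = "'p set \<times> 'p set"

definition Fnc_sigma :: "'p qspec \<Rightarrow> 'p set \<Rightarrow> ('p asg \<Rightarrow> tval) set" where
  "Fnc_sigma \<sigma> P = {F. (\<forall>p\<in>fst \<sigma> \<inter> P. behavioral P p F) \<and> (\<forall>p\<in>snd \<sigma> \<inter> P. strongly_behavioral P p F)}"

definition ext_asg :: "'p asg \<Rightarrow> ('p asg \<Rightarrow> tval) \<Rightarrow> 'p \<Rightarrow> 'p asg" where
  "ext_asg \<chi> F p = \<chi>(p \<mapsto> F \<chi>)"

definition ext_set :: "'p asg set \<Rightarrow> ('p asg \<Rightarrow> tval) \<Rightarrow> 'p \<Rightarrow> 'p asg set" where
  "ext_set S F p = {ext_asg \<chi> F p | \<chi>. \<chi> \<in> S}"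

definition ext_sigma :: "'p qspec \<Rightarrow> 'p hasg \<Rightarrow> 'p \<Rightarrow> 'p hasg" where
  "ext_sigma \<sigma> X p = {ext_set S F p | S F. S \<in> X \<and> F \<in> Fnc_sigma \<sigma> (ap X)}"

datatype 'p gfg =
    GLTL "'p ltl"
  | GNeg "'p gfg"
  | GAnd "'p gfg" "'p gfg"
  | GOr "'p gfg" "'p gfg"
  | GEx 'p "'p qspec" "'p gfg"
  | GAll 'p "'p qspec" "'p gfg"

fun free :: "'p gfg \<Rightarrow> 'p set" where
  "free (GLTL \<psi>) = ltl_props \<psi>"
| "free (GNeg a) = free a"
| "free (GAnd a b) = free a \<union> free b"
| "free (GOr a b) = free a \<union> free b"
| "free (GEx p \<sigma> a) = free a - {p}"
| "free (GAll p \<sigma> a) = free a - {p}"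

datatype flag = EA | AE

fun flip :: "flag \<Rightarrow> flag" where
  "flip EA = AE" | "flip AE = EA"

primrec sat :: "'p gfg \<Rightarrow> flag \<Rightarrow> 'p hasg \<Rightarrow> bool" where
  "sat (GLTL \<psi>) \<alpha> X =
     (case \<alpha> of EA \<Rightarrow> (\<exists>S\<in>X. \<forall>\<chi>\<in>S. models_ltl \<chi> \<psi>)
               | AE \<Rightarrow> (\<forall>S\<in>X. \<exists>\<chi>\<in>S. models_ltl \<chi> \<psi>))"
| "sat (GNeg a) \<alpha> X = (\<not> sat a (flip \<alpha>) X)"
| "sat (GAnd a b) \<alpha> X =
     (let H = (\<lambda>Y. \<forall>(Y1, Y2)\<in>par Y. (Y1 \<noteq> {} \<and> sat a EA Y1) \<or> (Y2 \<noteq> {} \<and> sat b EA Y2))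
      in case \<alpha> of EA \<Rightarrow> H X | AE \<Rightarrow> H (dual X))"
| "sat (GOr a b) \<alpha> X =
     (let H = (\<lambda>Y. \<exists>(Y1, Y2)\<in>par Y. (Y1 \<noteq> {} \<longrightarrow> sat a AE Y1) \<and> (Y2 \<noteq> {} \<longrightarrow> sat b AE Y2))
      in case \<alpha> of AE \<Rightarrow> H X | EA \<Rightarrow> H (dual X))"
| "sat (GEx p \<sigma> a) \<alpha> X =
     (case \<alpha> of EA \<Rightarrow> sat a EA (ext_sigma \<sigma> X p)
               | AE \<Rightarrow> sat a EA (ext_sigma \<sigma> (dual X) p))"
| "sat (GAll p \<sigma> a) \<alpha> X =
     (case \<alpha> of AE \<Rightarrow> sat a AE (ext_sigma \<sigma> X p)
               | EA \<Rightarrow> sat a AE (ext_sigma \<sigma> (dual X) p))"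

end

theory Submission
  imports Defs
begin

lemma Asg_dom: "x \<in> Asg P \<longleftrightarrow> dom x = P" unfolding Asg_def by simp

lemma ap_unique:
  assumes "X \<noteq> {}" "{} \<notin> X" "\<forall>S\<in>X. S \<subseteq> Asg P"
  shows "ap X = P"
  unfolding ap_def
proof (rule the_equality)
  show "\<forall>S\<in>X. S \<subseteq> Asg P" by fact
next
  fix P' assume h: "\<forall>S\<in>X. S \<subseteq> Asg P'"
  from assms(1) obtain S where S: "S \<in> X" by blast
  with assms(2) obtain x where x: "x \<in> S" by (metis ex_in_conv)
  have "x \<in> Asg P" using S x assms(3) by blast
  moreover have "x \<in> Asg P'" using S x h by blast
  ultimately show "P' = P" by (simp add: Asg_dom)
qed

lemma ap_eq:
  assumes "is_hasg X1" "is_hasg X2" "X1 \<sqsubseteq>\<^sub>H X2"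
  shows "ap X1 = ap X2"
proof -
  from assms(1) obtain P1 where P1: "\<forall>S\<in>X1. S \<subseteq> Asg P1" and n1: "X1 \<noteq> {}" "{} \<notin> X1"
    unfolding is_hasg_def by blast
  from assms(2) obtain P2 where P2: "\<forall>S\<in>X2. S \<subseteq> Asg P2" and n2: "X2 \<noteq> {}" "{} \<notin> X2"
    unfolding is_hasg_def by blast
  from n1 obtain S1 where S1: "S1 \<in> X1" by blast
  with assms(3) obtain S2 where S2: "S2 \<in> X2" "S2 \<subseteq> S1" unfolding hleq_def by blast
  with n2 obtain x where x: "x \<in> S2" by (metis ex_in_conv)
  have "x \<in> Asg P1" using x S2 S1 P1 by blast
  moreover have "x \<in> Asg P2" using x S2 P2 by blast
  ultimately have "P1 = P2" by (simp add: Asg_dom)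
  moreover have "ap X1 = P1" using ap_unique n1 P1 by blast
  moreover have "ap X2 = P2" using ap_unique n2 P2 by blast
  ultimately show ?thesis by simp
qed

lemma hasg_subset: "is_hasg X \<Longrightarrow> Y \<subseteq> X \<Longrightarrow> Y \<noteq> {} \<Longrightarrow> is_hasg Y"
  unfolding is_hasg_def by blast

lemma hasg_dual:
  fixes X :: "'p hasg"
  assumes "is_hasg X" shows "is_hasg (dual X)"
proof -
  from assms obtain P where P: "\<forall>S\<in>X. S \<subseteq> Asg P" and ne: "X \<noteq> {}" and nemp: "{} \<notin> X"
    unfolding is_hasg_def by blast
  define c :: "'p asg set \<Rightarrow> 'p asg" where "c = (\<lambda>S. SOME x. x \<in> S)"
  have c: "\<forall>S\<in>X. c S \<in> S" unfolding c_def using nemp by (metis ex_in_conv someI_ex)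
  hence "c ` X \<in> dual X" unfolding dual_def by blast
  hence "dual X \<noteq> {}" by blast
  moreover have "{} \<notin> dual X" using ne unfolding dual_def by blast
  moreover have "\<forall>S\<in>dual X. S \<subseteq> Asg P" unfolding dual_def using P by blast
  ultimately show ?thesis unfolding is_hasg_def by blast
qed

lemma const_Fnc: "(\<lambda>_ _. False) \<in> Fnc_sigma \<sigma> P"
  unfolding Fnc_sigma_def behavioral_def strongly_behavioral_def by simp

lemma hasg_ext:
  assumes "is_hasg X" shows "is_hasg (ext_sigma \<sigma> X p)"
proof -
  from assms obtain P where P: "\<forall>S\<in>X. S \<subseteq> Asg P" and ne: "X \<noteq> {}" and nemp: "{} \<notin> X"
    unfolding is_hasg_def by blast
  from ne obtain S where S: "S \<in> X" by blast
  have "ext_set S (\<lambda>_ _. False) p \<in> ext_sigma \<sigma> X p"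
    unfolding ext_sigma_def using S const_Fnc by blast
  hence "ext_sigma \<sigma> X p \<noteq> {}" by blast
  moreover have "{} \<notin> ext_sigma \<sigma> X p"
  proof
    assume "{} \<in> ext_sigma \<sigma> X p"
    then obtain S F where S: "S \<in> X" and e: "{} = ext_set S F p" unfolding ext_sigma_def by blast
    from S nemp obtain \<chi> where "\<chi> \<in> S" by (metis ex_in_conv)
    hence "ext_asg \<chi> F p \<in> ext_set S F p" unfolding ext_set_def by blast
    with e show False by simp
  qed
  moreover have "\<forall>T\<in>ext_sigma \<sigma> X p. T \<subseteq> Asg (insert p P)"
  proof (intro ballI subsetI)
    fix T y assume "T \<in> ext_sigma \<sigma> X p" "y \<in> T"
    then obtain S F \<chi> where "S \<in> X" "\<chi> \<in> S" "y = \<chi>(p \<mapsto> F \<chi>)"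
      unfolding ext_sigma_def ext_set_def ext_asg_def by blast
    moreover hence "\<chi> \<in> Asg P" using P by blast
    moreover hence "dom \<chi> = P" by (simp add: Asg_dom)
    ultimately show "y \<in> Asg (insert p P)" by (simp add: Asg_dom)
  qed
  ultimately show ?thesis unfolding is_hasg_def by blast
qed

lemma dual_mono: "X1 \<sqsubseteq>\<^sub>H X2 \<Longrightarrow> dual X2 \<sqsubseteq>\<^sub>H dual X1"
proof -
  assume h: "X1 \<sqsubseteq>\<^sub>H X2"
  then obtain g where g: "\<forall>S1\<in>X1. g S1 \<in> X2 \<and> g S1 \<subseteq> S1" unfolding hleq_def by metis
  show ?thesis unfolding hleq_def
  proof
    fix T assume "T \<in> dual X2"
    then obtain c where T: "T = c ` X2" and c: "\<forall>S\<in>X2. c S \<in> S" unfolding dual_def by blast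
    define c1 where "c1 = (\<lambda>S. c (g S))"
    have "\<forall>S\<in>X1. c1 S \<in> S" unfolding c1_def using g c by blast
    hence "c1 ` X1 \<in> dual X1" unfolding dual_def by blast
    moreover have "c1 ` X1 \<subseteq> T" unfolding c1_def T using g by blast
    ultimately show "\<exists>S2\<in>dual X1. S2 \<subseteq> T" by blast
  qed
qed

lemma ext_mono:
  assumes "ap X1 = ap X2" "X1 \<sqsubseteq>\<^sub>H X2"
  shows "ext_sigma \<sigma> X1 p \<sqsubseteq>\<^sub>H ext_sigma \<sigma> X2 p"
  unfolding hleq_def
proof
  fix T assume "T \<in> ext_sigma \<sigma> X1 p"
  then obtain S F where T: "T = ext_set S F p" and S: "S \<in> X1" and F: "F \<in> Fnc_sigma \<sigma> (ap X1)"
    unfolding ext_sigma_def by blast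
  from S assms(2) obtain S2 where S2: "S2 \<in> X2" "S2 \<subseteq> S" unfolding hleq_def by blast
  have "ext_set S2 F p \<in> ext_sigma \<sigma> X2 p" unfolding ext_sigma_def using S2 F assms(1) by auto
  moreover have "ext_set S2 F p \<subseteq> T" unfolding T ext_set_def using S2 by blast
  ultimately show "\<exists>S2\<in>ext_sigma \<sigma> X2 p. S2 \<subseteq> T" by blast
qed

lemma hleq_ne: "A \<sqsubseteq>\<^sub>H B \<Longrightarrow> A \<noteq> {} \<Longrightarrow> B \<noteq> {}"
  unfolding hleq_def by blast

lemma par_refine:
  assumes "A \<sqsubseteq>\<^sub>H B" "(Y1, Y2) \<in> par B"
  shows "\<exists>Z1 Z2. (Z1, Z2) \<in> par A \<and> Z1 \<sqsubseteq>\<^sub>H Y1 \<and> Z2 \<sqsubseteq>\<^sub>H Y2"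
proof -
  define Z1 where "Z1 = {S\<in>A. \<exists>T\<in>Y1. T \<subseteq> S}"
  define Z2 where "Z2 = A - Z1"
  have "(Z1, Z2) \<in> par A" unfolding par_def Z1_def Z2_def by blast
  moreover have "Z1 \<sqsubseteq>\<^sub>H Y1" unfolding hleq_def Z1_def by blast
  moreover have "Z2 \<sqsubseteq>\<^sub>H Y2" using assms unfolding hleq_def Z1_def Z2_def par_def by blast
  ultimately show ?thesis by blast
qed

definition Hand :: "'p gfg \<Rightarrow> 'p gfg \<Rightarrow> 'p hasg \<Rightarrow> bool" where
  "Hand a b Y = (\<forall>(Y1, Y2)\<in>par Y. (Y1 \<noteq> {} \<and> sat a EA Y1) \<or> (Y2 \<noteq> {} \<and> sat b EA Y2))"

definition Hor :: "'p gfg \<Rightarrow> 'p gfg \<Rightarrow> 'p hasg \<Rightarrow> bool" where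
  "Hor a b Y = (\<exists>(Y1, Y2)\<in>par Y. (Y1 \<noteq> {} \<longrightarrow> sat a AE Y1) \<and> (Y2 \<noteq> {} \<longrightarrow> sat b AE Y2))"

lemma sat_And: "sat (GAnd a b) EA X = Hand a b X" "sat (GAnd a b) AE X = Hand a b (dual X)"
  unfolding Hand_def by simp_all

lemma sat_Or: "sat (GOr a b) AE X = Hor a b X" "sat (GOr a b) EA X = Hor a b (dual X)"
  unfolding Hor_def by simp_all

lemma par_sub: "(Y1, Y2) \<in> par Y \<Longrightarrow> Y1 \<subseteq> Y \<and> Y2 \<subseteq> Y"
  unfolding par_def by blast

lemma hand_mono:
  assumes IHa: "\<And>X1 X2. is_hasg X1 \<Longrightarrow> is_hasg X2 \<Longrightarrow> X1 \<sqsubseteq>\<^sub>H X2 \<Longrightarrow> sat a EA X1 \<Longrightarrow> sat a EA X2"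
    and IHb: "\<And>X1 X2. is_hasg X1 \<Longrightarrow> is_hasg X2 \<Longrightarrow> X1 \<sqsubseteq>\<^sub>H X2 \<Longrightarrow> sat b EA X1 \<Longrightarrow> sat b EA X2"
    and hA: "is_hasg A" and hB: "is_hasg B" and le: "A \<sqsubseteq>\<^sub>H B" and H: "Hand a b A"
  shows "Hand a b B"
  unfolding Hand_def
proof (clarify)
  fix Y1 Y2 assume Y: "(Y1, Y2) \<in> par B" and n: "\<not> (Y2 \<noteq> {} \<and> sat b EA Y2)"
  from par_refine[OF le Y] obtain Z1 Z2 where Z: "(Z1, Z2) \<in> par A" "Z1 \<sqsubseteq>\<^sub>H Y1" "Z2 \<sqsubseteq>\<^sub>H Y2" by blast
  from H Z(1) have "(Z1 \<noteq> {} \<and> sat a EA Z1) \<or> (Z2 \<noteq> {} \<and> sat b EA Z2)" unfolding Hand_def by blast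
  thus "Y1 \<noteq> {} \<and> sat a EA Y1"
  proof
    assume h: "Z1 \<noteq> {} \<and> sat a EA Z1"
    hence ne: "Y1 \<noteq> {}" using hleq_ne Z(2) by blast
    show ?thesis using IHa[OF hasg_subset[OF hA _ ] hasg_subset[OF hB _ ne] Z(2)] h ne
        par_sub[OF Z(1)] par_sub[OF Y] by blast
  next
    assume h: "Z2 \<noteq> {} \<and> sat b EA Z2"
    hence ne: "Y2 \<noteq> {}" using hleq_ne Z(3) by blast
    have "sat b EA Y2" using IHb[OF hasg_subset[OF hA _ ] hasg_subset[OF hB _ ne] Z(3)] h
        par_sub[OF Z(1)] par_sub[OF Y] by blast
    with n ne show ?thesis by blast
  qed
qed

lemma hor_mono:
  assumes IHa: "\<And>X1 X2. is_hasg X1 \<Longrightarrow> is_hasg X2 \<Longrightarrow> X1 \<sqsubseteq>\<^sub>H X2 \<Longrightarrow> sat a AE X2 \<Longrightarrow> sat a AE X1"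
    and IHb: "\<And>X1 X2. is_hasg X1 \<Longrightarrow> is_hasg X2 \<Longrightarrow> X1 \<sqsubseteq>\<^sub>H X2 \<Longrightarrow> sat b AE X2 \<Longrightarrow> sat b AE X1"
    and hA: "is_hasg A" and hB: "is_hasg B" and le: "A \<sqsubseteq>\<^sub>H B" and H: "Hor a b B"
  shows "Hor a b A"
proof -
  from H obtain Y1 Y2 where Y: "(Y1, Y2) \<in> par B" and s1: "Y1 \<noteq> {} \<longrightarrow> sat a AE Y1"
    and s2: "Y2 \<noteq> {} \<longrightarrow> sat b AE Y2" unfolding Hor_def by blast
  from par_refine[OF le Y] obtain Z1 Z2 where Z: "(Z1, Z2) \<in> par A" "Z1 \<sqsubseteq>\<^sub>H Y1" "Z2 \<sqsubseteq>\<^sub>H Y2" by blast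
  have "Z1 \<noteq> {} \<longrightarrow> sat a AE Z1"
  proof
    assume h: "Z1 \<noteq> {}"
    hence ne: "Y1 \<noteq> {}" using hleq_ne Z(2) by blast
    show "sat a AE Z1" using IHa[OF hasg_subset[OF hA _ h] hasg_subset[OF hB _ ne] Z(2)] s1 ne
        par_sub[OF Z(1)] par_sub[OF Y] by blast
  qed
  moreover have "Z2 \<noteq> {} \<longrightarrow> sat b AE Z2"
  proof
    assume h: "Z2 \<noteq> {}"
    hence ne: "Y2 \<noteq> {}" using hleq_ne Z(3) by blast
    show "sat b AE Z2" using IHb[OF hasg_subset[OF hA _ h] hasg_subset[OF hB _ ne] Z(3)] s2 ne
        par_sub[OF Z(1)] par_sub[OF Y] by blast
  qed
  ultimately show ?thesis using Z(1) unfolding Hor_def by (intro bexI[of _ "(Z1, Z2)"]) simp_all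
qed

lemma main:
  "is_hasg X1 \<Longrightarrow> is_hasg X2 \<Longrightarrow> X1 \<sqsubseteq>\<^sub>H X2 \<Longrightarrow>
    (sat \<phi> EA X1 \<longrightarrow> sat \<phi> EA X2) \<and> (sat \<phi> AE X2 \<longrightarrow> sat \<phi> AE X1)"
proof (induction \<phi> arbitrary: X1 X2)
  case (GLTL \<psi>)
  have le: "\<forall>S1\<in>X1. \<exists>S2\<in>X2. S2 \<subseteq> S1" using GLTL.prems(3) unfolding hleq_def .
  have A: "sat (GLTL \<psi>) EA X2" if "sat (GLTL \<psi>) EA X1"
  proof -
    from that obtain S where S: "S \<in> X1" "\<forall>\<chi>\<in>S. models_ltl \<chi> \<psi>" by auto
    from le S(1) obtain T where "T \<in> X2" "T \<subseteq> S" by blast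
    with S(2) show ?thesis by auto
  qed
  have B: "sat (GLTL \<psi>) AE X1" if "sat (GLTL \<psi>) AE X2"
  proof -
    have "\<exists>\<chi>\<in>S. models_ltl \<chi> \<psi>" if S: "S \<in> X1" for S
    proof -
      from le S obtain T where T: "T \<in> X2" "T \<subseteq> S" by blast
      with \<open>sat (GLTL \<psi>) AE X2\<close> obtain \<chi> where "\<chi> \<in> T" "models_ltl \<chi> \<psi>" by auto
      with T show ?thesis by blast
    qed
    thus ?thesis by simp
  qed
  show ?case using A B by blast
next
  case (GNeg a)
  have h: "(sat a EA X1 \<longrightarrow> sat a EA X2) \<and> (sat a AE X2 \<longrightarrow> sat a AE X1)"
    using GNeg.IH GNeg.prems by blast
  show ?case using h by auto
next
  case (GAnd a b)
  have IHa: "\<And>X1 X2. is_hasg X1 \<Longrightarrow> is_hasg X2 \<Longrightarrow> X1 \<sqsubseteq>\<^sub>H X2 \<Longrightarrow> sat a EA X1 \<Longrightarrow> sat a EA X2"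
    using GAnd.IH(1) by blast
  have IHb: "\<And>X1 X2. is_hasg X1 \<Longrightarrow> is_hasg X2 \<Longrightarrow> X1 \<sqsubseteq>\<^sub>H X2 \<Longrightarrow> sat b EA X1 \<Longrightarrow> sat b EA X2"
    using GAnd.IH(2) by blast
  note r1 = hand_mono[OF IHa IHb GAnd.prems]
  note r2 = hand_mono[OF IHa IHb hasg_dual[OF GAnd.prems(2)] hasg_dual[OF GAnd.prems(1)] dual_mono[OF GAnd.prems(3)]]
  show ?case unfolding sat_And using r1 r2 by (intro conjI impI)
next
  case (GOr a b)
  have IHa: "\<And>X1 X2. is_hasg X1 \<Longrightarrow> is_hasg X2 \<Longrightarrow> X1 \<sqsubseteq>\<^sub>H X2 \<Longrightarrow> sat a AE X2 \<Longrightarrow> sat a AE X1"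
    using GOr.IH(1) by blast
  have IHb: "\<And>X1 X2. is_hasg X1 \<Longrightarrow> is_hasg X2 \<Longrightarrow> X1 \<sqsubseteq>\<^sub>H X2 \<Longrightarrow> sat b AE X2 \<Longrightarrow> sat b AE X1"
    using GOr.IH(2) by blast
  note r1 = hor_mono[OF IHa IHb GOr.prems]
  note r2 = hor_mono[OF IHa IHb hasg_dual[OF GOr.prems(2)] hasg_dual[OF GOr.prems(1)] dual_mono[OF GOr.prems(3)]]
  show ?case unfolding sat_Or using r1 r2 by (intro conjI impI)
next
  case (GEx p \<sigma> a)
  have d1: "is_hasg (dual X1)" "is_hasg (dual X2)"
    using hasg_dual[OF GEx.prems(1)] hasg_dual[OF GEx.prems(2)] by auto
  have dl: "dual X2 \<sqsubseteq>\<^sub>H dual X1" using dual_mono[OF GEx.prems(3)] .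
  have e1: "ext_sigma \<sigma> X1 p \<sqsubseteq>\<^sub>H ext_sigma \<sigma> X2 p"
    using ext_mono[OF ap_eq[OF GEx.prems] GEx.prems(3)] .
  have e2: "ext_sigma \<sigma> (dual X2) p \<sqsubseteq>\<^sub>H ext_sigma \<sigma> (dual X1) p"
    using ext_mono[OF ap_eq[OF d1(2) d1(1) dl] dl] .
  note i1 = GEx.IH[OF hasg_ext[OF GEx.prems(1)] hasg_ext[OF GEx.prems(2)] e1]
  note i2 = GEx.IH[OF hasg_ext[OF d1(2)] hasg_ext[OF d1(1)] e2]
  show ?case unfolding sat.simps flag.case using i1 i2 by blast
next
  case (GAll p \<sigma> a)
  have d1: "is_hasg (dual X1)" "is_hasg (dual X2)"
    using hasg_dual[OF GAll.prems(1)] hasg_dual[OF GAll.prems(2)] by auto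
  have dl: "dual X2 \<sqsubseteq>\<^sub>H dual X1" using dual_mono[OF GAll.prems(3)] .
  have e1: "ext_sigma \<sigma> X1 p \<sqsubseteq>\<^sub>H ext_sigma \<sigma> X2 p"
    using ext_mono[OF ap_eq[OF GAll.prems] GAll.prems(3)] .
  have e2: "ext_sigma \<sigma> (dual X2) p \<sqsubseteq>\<^sub>H ext_sigma \<sigma> (dual X1) p"
    using ext_mono[OF ap_eq[OF d1(2) d1(1) dl] dl] .
  note i1 = GAll.IH[OF hasg_ext[OF GAll.prems(1)] hasg_ext[OF GAll.prems(2)] e1]
  note i2 = GAll.IH[OF hasg_ext[OF d1(2)] hasg_ext[OF d1(1)] e2]
  show ?case unfolding sat.simps flag.case using i1 i2 by blast
qed

theorem mainTheorem8:
  fixes \<phi> :: "'p gfg" and X1 X2 :: "'p hasg"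
  assumes "X1 \<in> HAsg_sup (free \<phi>)" and "X2 \<in> HAsg_sup (free \<phi>)"
    and "X1 \<sqsubseteq>\<^sub>H X2"
  shows "(sat \<phi> EA X1 \<longrightarrow> sat \<phi> EA X2) \<and> (sat \<phi> AE X2 \<longrightarrow> sat \<phi> AE X1)"
  using main[of X1 X2 \<phi>] assms unfolding HAsg_sup_def by simp

end
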